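(* Let $a\in\mathbb{R}$ and $w\in\mathbb{C}\setminus\mathbb{R}$ with $(a,w)\in D_c$, and suppose $\varphi := |\operatorname{Arg}(w)| \in (0,\pi/2]$. Then $\tau_c(a,w) > 1$ if and only if $a > 0$ and $|w| < R(-a;\varphi)$.
   Context: $\operatorname{Arg}(w)\in(-\pi,\pi]$ is the principal argument; $\arccos:[-1,1]\to[0,\pi]$. $D_c := \{(a,w)\in\mathbb{R}\times(\mathbb{C}\setminus\{0\}) : \operatorname{Re}(w)<a<|w|\}$ and for $(a,w)\in D_c$, $\tau_c(a,w) := \frac{1}{\sqrt{|w|^2-a^2}}[|\operatorname{Arg}(w)| - \arccos(a/|w|)]$. For $\varphi\in(0,\pi/2]$, $C(\theta;\varphi) := \theta\cot(\theta-\varphi)$ is a strictly decreasing bijection from $[0,\varphi)$ onto $(-\infty,0]$ with inverse $C^{-1}(\cdot;\varphi)$, and $R(r;\varphi) := -C^{-1}(r;\varphi)/\sin(C^{-1}(r;\varphi)-\varphi)$ for $r\le 0$. *)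

theory Defs
  imports "HOL-Analysis.Analysis"
begin

definition Dc :: "(real \<times> complex) set" where
  "Dc = {(a, w). w \<noteq> 0 \<and> Re w < a \<and> a < cmod w}"

definition tau_c :: "real \<Rightarrow> complex \<Rightarrow> real" where
  "tau_c a w = (\<bar>Arg w\<bar> - arccos (a / cmod w)) / sqrt ((cmod w)\<^sup>2 - a\<^sup>2)"

definition Cfun :: "real \<Rightarrow> real \<Rightarrow> real" where
  "Cfun \<theta> \<phi> = \<theta> * cot (\<theta> - \<phi>)"

(* inverse of C(.;phi) : [0,phi) -> (-inf,0] *)
definition Cinv :: "real \<Rightarrow> real \<Rightarrow> real" where
  "Cinv r \<phi> = (THE \<theta>. 0 \<le> \<theta> \<and> \<theta> < \<phi> \<and> Cfun \<theta> \<phi> = r)"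

definition Rfun :: "real \<Rightarrow> real \<Rightarrow> real" where
  "Rfun r \<phi> = - Cinv r \<phi> / sin (Cinv r \<phi> - \<phi>)"

end

theory Submission
  imports Defs
begin

lemma kdec:
  fixes \<phi> a x y :: real
  assumes "0 < a" "\<phi> \<le> pi/2" "0 \<le> x" "x < y" "y \<le> \<phi>"
  shows "(\<phi> - y) * cos y - a * sin y < (\<phi> - x) * cos x - a * sin x"
proof -
  have c1: "cos y \<le> cos x" using assms by (intro cos_monotone_0_pi_le) auto
  have c0: "0 \<le> cos y" using assms by (intro cos_ge_zero) auto
  have s: "sin x < sin y" using assms by (intro sin_monotone_2pi) auto
  have "(\<phi> - y) * cos y \<le> (\<phi> - x) * cos y" using c0 assms by (intro mult_right_mono) auto
  also have "\<dots> \<le> (\<phi> - x) * cos x" using c1 assms by (intro mult_left_mono) auto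
  finally show ?thesis using s assms by (smt (verit) mult_strict_left_mono)
qed

theorem mainTheorem13:
  fixes a :: real and w :: complex
  assumes "w \<notin> \<real>"
    and "(a, w) \<in> Dc"
    and "0 < \<bar>Arg w\<bar>" and "\<bar>Arg w\<bar> \<le> pi / 2"
  shows "tau_c a w > 1 \<longleftrightarrow> (a > 0 \<and> cmod w < Rfun (- a) \<bar>Arg w\<bar>)"
proof -
  define \<phi> where "\<phi> = \<bar>Arg w\<bar>"
  define \<rho> where "\<rho> = cmod w"
  have w0: "w \<noteq> 0" and reA: "Re w < a" and aR: "a < \<rho>"
    using assms(2) by (auto simp: Dc_def \<rho>_def)
  have \<rho>0: "\<rho> > 0" using w0 by (simp add: \<rho>_def)
  have ph0: "0 < \<phi>" and ph2: "\<phi> \<le> pi/2" using assms(3,4) by (auto simp: \<phi>_def)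
  have cphi: "cos \<phi> = Re w / \<rho>" unfolding \<phi>_def \<rho>_def
    using cos_Arg[OF w0] by (simp add: abs_if)
  have cphi0: "0 \<le> cos \<phi>" using ph0 ph2 by (intro cos_ge_zero) auto
  have "0 \<le> Re w" using cphi cphi0 \<rho>0 by (simp add: zero_le_divide_iff)
  hence a0: "a > 0" using reA by linarith
  have lt: "cos \<phi> < a / \<rho>" using cphi reA \<rho>0 by (simp add: divide_strict_right_mono)
  have lt1: "a / \<rho> < 1" using aR \<rho>0 by simp
  have gt0: "0 < a / \<rho>" using a0 \<rho>0 by simp
  define \<psi> where "\<psi> = arccos (a / \<rho>)"
  have cpsi: "cos \<psi> = a / \<rho>" unfolding \<psi>_def using lt1 gt0 by simp
  have psi_lt: "\<psi> < \<phi>"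
  proof -
    have "\<psi> < arccos (cos \<phi>)" unfolding \<psi>_def
      using lt lt1 cphi0 by (intro arccos_less_arccos) auto
    thus ?thesis using arccos_cos[of \<phi>] ph0 ph2 by simp
  qed
  have psi0: "0 < \<psi>"
  proof -
    have "arccos 1 < \<psi>" unfolding \<psi>_def using lt1 gt0 by (intro arccos_less_arccos) auto
    thus ?thesis by simp
  qed
  have spsi: "sin \<psi> = sqrt (1 - (a/\<rho>)\<^sup>2)" unfolding \<psi>_def
    using lt1 gt0 by (intro sin_arccos_abs) auto
  have spos: "sin \<psi> > 0" using psi0 psi_lt ph2 by (intro sin_gt_zero) auto
  have cpos: "cos \<psi> > 0" using gt0 cpsi by simp
  have sq: "sqrt (\<rho>\<^sup>2 - a\<^sup>2) = \<rho> * sin \<psi>"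
  proof -
    have "\<rho>\<^sup>2 - a\<^sup>2 = \<rho>\<^sup>2 * (1 - (a/\<rho>)\<^sup>2)" using \<rho>0 by (simp add: field_simps power2_eq_square)
    thus ?thesis using spsi \<rho>0 by (simp add: real_sqrt_mult)
  qed
  have tau: "tau_c a w = (\<phi> - \<psi>) / (\<rho> * sin \<psi>)"
    unfolding tau_c_def using sq by (simp add: \<phi>_def \<rho>_def \<psi>_def)
  define k where "k x = (\<phi> - x) * cos x - a * sin x" for x
  have kd: "\<And>x y. 0 \<le> x \<Longrightarrow> x < y \<Longrightarrow> y \<le> \<phi> \<Longrightarrow> k y < k x"
    unfolding k_def using kdec a0 ph2 by blast
  obtain ps where ps: "0 \<le> ps" "ps \<le> \<phi>" "k ps = 0"
  proof -
    have "k \<phi> \<le> 0" unfolding k_def using a0 ph0 ph2 sin_ge_zero[of \<phi>] by simp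
    moreover have "0 \<le> k 0" unfolding k_def using ph0 by simp
    moreover have "\<forall>x. 0 \<le> x \<and> x \<le> \<phi> \<longrightarrow> isCont k x" unfolding k_def by (auto intro!: continuous_intros)
    ultimately show ?thesis using IVT2[of k \<phi> 0 0] ph0 that by auto
  qed
  have ps0: "0 < ps" using ps ph0 unfolding k_def by (cases "ps = 0") auto
  have psphi: "ps < \<phi>"
  proof (rule ccontr)
    assume "\<not> ps < \<phi>"
    hence "ps = \<phi>" using ps by simp
    hence "a * sin \<phi> = 0" using ps unfolding k_def by simp
    moreover have "sin \<phi> > 0" using ph0 ph2 by (intro sin_gt_zero) auto
    ultimately show False using a0 by simp
  qed
  have sps: "sin ps > 0" using ps0 psphi ph2 by (intro sin_gt_zero) auto
  have cps: "cos ps > 0" using ps0 psphi ph2 by (intro cos_gt_zero) auto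
  have Cinv: "Cinv (- a) \<phi> = \<phi> - ps"
    unfolding Cinv_def
  proof (rule the_equality)
    have "Cfun (\<phi> - ps) \<phi> = - ((\<phi> - ps) * cos ps / sin ps)"
      by (simp add: Cfun_def cot_def)
    also have "(\<phi> - ps) * cos ps = a * sin ps" using ps unfolding k_def by simp
    finally show "0 \<le> \<phi> - ps \<and> \<phi> - ps < \<phi> \<and> Cfun (\<phi> - ps) \<phi> = - a"
      using sps ps0 psphi by simp
  next
    fix \<theta> assume th: "0 \<le> \<theta> \<and> \<theta> < \<phi> \<and> Cfun \<theta> \<phi> = - a"
    have st: "sin (\<phi> - \<theta>) > 0" using th ph2 by (intro sin_gt_zero) auto
    have "Cfun \<theta> \<phi> = - (\<theta> * cos (\<phi> - \<theta>) / sin (\<phi> - \<theta>))"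
      using cos_minus[of "\<phi> - \<theta>"] sin_minus[of "\<phi> - \<theta>"] by (simp add: Cfun_def cot_def)
    hence "\<theta> * cos (\<phi> - \<theta>) = a * sin (\<phi> - \<theta>)" using th st by (simp add: field_simps)
    hence kt: "k (\<phi> - \<theta>) = 0" unfolding k_def by simp
    show "\<theta> = \<phi> - ps"
    proof (rule ccontr)
      assume "\<theta> \<noteq> \<phi> - ps"
      hence "\<phi> - \<theta> < ps \<or> ps < \<phi> - \<theta>" by linarith
      thus False using kd[of "\<phi> - \<theta>" ps] kd[of ps "\<phi> - \<theta>"] kt ps th by auto
    qed
  qed
  have kps: "(\<phi> - ps) * cos ps = a * sin ps" using ps unfolding k_def by simp
  have R: "Rfun (- a) \<phi> = a / cos ps"
  proof -
    have "Rfun (- a) \<phi> = (\<phi> - ps) / sin ps" unfolding Rfun_def Cinv using sps by (simp add: field_simps)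
    also have "\<dots> = a / cos ps" using kps sps cps by (simp add: field_simps)
    finally show ?thesis .
  qed
  have "tau_c a w > 1 \<longleftrightarrow> \<rho> * sin \<psi> < \<phi> - \<psi>"
    unfolding tau using \<rho>0 spos by (simp add: less_divide_eq)
  also have "\<rho> = a / cos \<psi>" using cpsi \<rho>0 a0 cpos by (simp add: field_simps)
  also have "a / cos \<psi> * sin \<psi> < \<phi> - \<psi> \<longleftrightarrow> k \<psi> > 0"
    unfolding k_def using cpos by (simp add: field_simps)
  also have "\<dots> \<longleftrightarrow> \<psi> < ps"
  proof
    assume "k \<psi> > 0"
    show "\<psi> < ps"
    proof (rule ccontr)
      assume "\<not> \<psi> < ps"
      hence "ps = \<psi> \<or> ps < \<psi>" by linarith
      thus False using kd[of ps \<psi>] ps psi_lt \<open>k \<psi> > 0\<close> by auto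
    qed
  next
    assume "\<psi> < ps" thus "k \<psi> > 0" using kd[of \<psi> ps] ps psi0 by auto
  qed
  also have "\<dots> \<longleftrightarrow> cos ps < cos \<psi>"
    using psi0 psi_lt ps0 psphi ph2 by (intro cos_mono_less_eq[symmetric]) auto
  also have "\<dots> \<longleftrightarrow> \<rho> < a / cos ps"
  proof -
    have "a = \<rho> * cos \<psi>" using cpsi \<rho>0 by (simp add: field_simps)
    hence "\<rho> < a / cos ps \<longleftrightarrow> \<rho> * cos ps < \<rho> * cos \<psi>" using cps by (simp add: pos_less_divide_eq)
    thus ?thesis using \<rho>0 by simp
  qed
  finally show ?thesis using a0 R by (simp add: \<phi>_def \<rho>_def)
qed

end
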